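(* Let $n\geq 2$, $1\leq k\leq n-1$, $w=w_1\cdots w_n\in\mathfrak{S}_n$, and let $i<j$ with $w_i\cdots w_j$ a $k$-up. Let $i\leq i'<j'\leq j$ be such that $w_{i'}\cdots w_{j'}$ is a $k$-up with $j'-i'$ minimal among all $k$-ups $w_{a}\cdots w_{b}$ with $i\le a<b\le j$. Then $w_{i'}\cdots w_{j'}$ is a $k$-ascending section.
   Context: $\mathfrak{S}_n$ is the set of permutations $w=w_1\cdots w_n$ of $\{1,\dots,n\}$. A section of $w$ is a consecutive block $w_sw_{s+1}\cdots w_t$ ($s\le t$). A section $w_s\cdots w_t$ is a $k$-up if $s<t$ and $w_t-w_s\geq k$, and a $k$-down if $s<t$ and $w_s-w_t\geq k$. A $k$-down "in" the section $w_a\cdots w_b$ means a $k$-down $w_s\cdots w_t$ with $a\leq s<t\leq b$. A section $w_i\cdots w_j$ with $i<j$ is $k$-ascending if: $w_i=\min\{w_i,\dots,w_j\}$ and $w_j=\max\{w_i,\dots,w_j\}$; $w_j-w_i\geq k$; and there is no $k$-down in $w_i\cdots w_j$. *)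

theory Defs
  imports Main
begin

(* A permutation w = w_1 ... w_n of {1..n} is a function w :: nat => nat
   (positions 1..n, values outside irrelevant) with w a bijection {1..n} -> {1..n}. *)
definition is_perm :: "nat \<Rightarrow> (nat \<Rightarrow> nat) \<Rightarrow> bool" where
  "is_perm n w \<longleftrightarrow> bij_betw w {1..n} {1..n}"

definition k_up :: "nat \<Rightarrow> (nat \<Rightarrow> nat) \<Rightarrow> nat \<Rightarrow> nat \<Rightarrow> bool" where
  "k_up k w s t \<longleftrightarrow> s < t \<and> int (w t) - int (w s) \<ge> int k"

definition k_down :: "nat \<Rightarrow> (nat \<Rightarrow> nat) \<Rightarrow> nat \<Rightarrow> nat \<Rightarrow> bool" where
  "k_down k w s t \<longleftrightarrow> s < t \<and> int (w s) - int (w t) \<ge> int k"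

definition has_k_down_in :: "nat \<Rightarrow> (nat \<Rightarrow> nat) \<Rightarrow> nat \<Rightarrow> nat \<Rightarrow> bool" where
  "has_k_down_in k w a b \<longleftrightarrow> (\<exists>s t. a \<le> s \<and> s < t \<and> t \<le> b \<and> k_down k w s t)"

definition k_ascending :: "nat \<Rightarrow> (nat \<Rightarrow> nat) \<Rightarrow> nat \<Rightarrow> nat \<Rightarrow> bool" where
  "k_ascending k w i j \<longleftrightarrow> i < j
     \<and> w i = Min (w ` {i..j}) \<and> w j = Max (w ` {i..j})
     \<and> int (w j) - int (w i) \<ge> int k
     \<and> \<not> has_k_down_in k w i j"

end

theory Submission
  imports Defs
begin

theorem lemma2p5:
  fixes n k i j i' j' :: nat and w :: "nat \<Rightarrow> nat"
  assumes "n \<ge> 2" and "1 \<le> k" and "k \<le> n - 1"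
    and "is_perm n w"
    and "1 \<le> i" and "i < j" and "j \<le> n"
    and "k_up k w i j"
    and "i \<le> i'" and "i' < j'" and "j' \<le> j"
    and "k_up k w i' j'"
    and "\<And>a b. i \<le> a \<Longrightarrow> a < b \<Longrightarrow> b \<le> j \<Longrightarrow> k_up k w a b \<Longrightarrow> j' - i' \<le> b - a"
  shows "k_ascending k w i' j'"
proof -
  note up = assms(12)[unfolded k_up_def]
  note minl = assms(13)
  have mn: "w i' \<le> w m" if "m \<in> {i'..j'}" for m
  proof (rule ccontr)
    assume c: "\<not> w i' \<le> w m"
    have "m \<noteq> j'" using c up assms(2) by auto
    hence "m < j'" "i' < m" using that c by (auto simp: le_less)
    hence "k_up k w m j'" using c up by (auto simp: k_up_def)
    from minl[OF _ \<open>m < j'\<close> _ this] \<open>i' < m\<close> \<open>m < j'\<close> assms(9,11) show False by auto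
  qed
  have mx: "w m \<le> w j'" if "m \<in> {i'..j'}" for m
  proof (rule ccontr)
    assume c: "\<not> w m \<le> w j'"
    have "m \<noteq> i'" using c up assms(2) by auto
    hence "m < j'" "i' < m" using that c by (auto simp: le_less)
    hence "k_up k w i' m" using c up by (auto simp: k_up_def)
    from minl[OF _ \<open>i' < m\<close> _ this] \<open>m < j'\<close> \<open>i' < m\<close> assms(9,11) show False by auto
  qed
  have nd: "\<not> has_k_down_in k w i' j'"
  proof
    assume "has_k_down_in k w i' j'"
    then obtain s t where st: "i' \<le> s" "s < t" "t \<le> j'" "k_down k w s t"
      unfolding has_k_down_in_def by blast
    have "w i' \<le> w t" using mn st by auto
    hence "s \<noteq> i'" using st assms(2) by (auto simp: k_down_def)
    hence "i' < s" "s < j'" using st by auto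
    moreover have "w i' \<le> w t" using mn st by auto
    ultimately have "k_up k w i' s" using st by (auto simp: k_up_def k_down_def)
    from minl[OF _ \<open>i' < s\<close> _ this] \<open>s < j'\<close> \<open>i' < s\<close> assms(9,11) show False by auto
  qed
  have "w i' = Min (w ` {i'..j'})"
    by (rule Min_eqI[symmetric]) (use mn assms(10) in auto)
  moreover have "w j' = Max (w ` {i'..j'})"
    by (rule Max_eqI[symmetric]) (use mx assms(10) in auto)
  ultimately show ?thesis using nd up unfolding k_ascending_def by auto
qed

end
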